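(* Let $M \le N$, let $F:\mathbb{R}^M\to\mathbb{R}^M$ be a differentiable latent map, and let $G:\mathbb{R}^M\to\mathbb{R}^N$, $G(\bm z)=\bm B\bm z$, be a linear observation model with $\bm B\in\mathbb{R}^{N\times M}$ of full rank. Let $\bm J(\bm z)=\partial F(\bm z)/\partial \bm z$ and suppose $$\tilde\sigma_{\max}:=\sup\{\|\bm J(\bm z)\|_2=\sigma_{\max}(\bm J(\bm z)) : \bm z\in\mathbb{R}^M\}$$ satisfies $1<\tilde\sigma_{\max}<\infty$. Choose the forcing strength $\alpha\in(\alpha^*,1]$, where $\alpha^*:=1-\tilde\sigma_{\max}^{-1}$, and set $$\rho:=(1-\alpha)\,\tilde\sigma_{\max}.$$ Then $\rho<1$, and the forced system $F\circ\delta_{\alpha,\bm B}$ is globally contracting with rate $\rho$: for every teacher sequence $(\bm x_t)_{t\ge 0}$ in $\mathbb{R}^N$, every $t$ and every $\bm z\in\mathbb{R}^M$, the Jacobian of the forced map $\bm z\mapsto F(\delta_{\alpha,\bm B}(\bm z,\bm x_t))$ has spectral norm at most $\rho$. Moreover, the largest Lyapunov exponent of the forced system (along any orbit) satisfies $$\lambda_{\mathrm{GTF}}\le \log\rho<0.$$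
   Context: Generalized teacher forcing: for a forcing strength $\alpha\in[0,1]$ and observation matrix $\bm B$ with Moore–Penrose pseudo-inverse $\bm B^+$, define $\delta_{\alpha,\bm B}(\bm z,\bm x)=(\bm I-\alpha\bm B^+\bm B)\bm z+\alpha\bm B^+\bm x$. The forced system is the (non-autonomous) recursion $\bm z_t=F(\delta_{\alpha,\bm B}(\bm z_{t-1},\bm x_{t-1}))$ driven by a given data (teacher) sequence $\bm x_t\in\mathbb{R}^N$. For an iterated (possibly time-dependent) map with Jacobians $\bm J_t$ evaluated along the orbit starting at $\bm z_0$, the largest Lyapunov exponent is $\lambda(\bm z_0)=\lim_{T\to\infty}\frac1T\log\|\bm J_T\bm J_{T-1}\cdots\bm J_1\|_2$; the map is called contracting at $\bm z_0$ if $\lambda(\bm z_0)<0$ and divergent if $\lambda(\bm z_0)>0$. $\lambda_{\mathrm{GTF}}$ denotes this exponent for the forced system, with $\bm J_t$ the Jacobian of $\bm z\mapsto F(\delta_{\alpha,\bm B}(\bm z,\bm x_{t-1}))$ at $\bm z_{t-1}$. *)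

theory Defs
  imports "HOL-Analysis.Analysis"
begin

text \<open>Moore--Penrose pseudo-inverse of a matrix B (N x M, i.e. real^'m^'n),
  characterised by the four Penrose conditions (it exists and is unique).\<close>
definition pinv :: "real^'m^'n \<Rightarrow> real^'n^'m" where
  "pinv B = (THE P. B ** P ** B = B \<and> P ** B ** P = P \<and>
               transpose (B ** P) = B ** P \<and> transpose (P ** B) = P ** B)"

definition spec_norm :: "real^'a^'b \<Rightarrow> real" where
  "spec_norm A = onorm (\<lambda>v. A *v v)"

definition jacobian :: "(real^'m \<Rightarrow> real^'m) \<Rightarrow> real^'m \<Rightarrow> real^'m^'m" where
  "jacobian F z = matrix (frechet_derivative F (at z))"

definition gtf_delta :: "real \<Rightarrow> real^'m^'n \<Rightarrow> real^'m \<Rightarrow> real^'n \<Rightarrow> real^'m" where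
  "gtf_delta \<alpha> B z x = (mat 1 - \<alpha> *\<^sub>R (pinv B ** B)) *v z + \<alpha> *\<^sub>R (pinv B *v x)"

primrec forced_orbit :: "(real^'m \<Rightarrow> real^'m) \<Rightarrow> real \<Rightarrow> real^'m^'n \<Rightarrow> (nat \<Rightarrow> real^'n)
    \<Rightarrow> real^'m \<Rightarrow> nat \<Rightarrow> real^'m" where
  "forced_orbit F \<alpha> B xs z0 0 = z0"
| "forced_orbit F \<alpha> B xs z0 (Suc t) = F (gtf_delta \<alpha> B (forced_orbit F \<alpha> B xs z0 t) (xs t))"

primrec jac_product :: "(real^'m \<Rightarrow> real^'m) \<Rightarrow> real \<Rightarrow> real^'m^'n \<Rightarrow> (nat \<Rightarrow> real^'n)
    \<Rightarrow> real^'m \<Rightarrow> nat \<Rightarrow> real^'m^'m" where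
  "jac_product F \<alpha> B xs z0 0 = mat 1"
| "jac_product F \<alpha> B xs z0 (Suc T) =
     jacobian (\<lambda>z. F (gtf_delta \<alpha> B z (xs T))) (forced_orbit F \<alpha> B xs z0 T)
     ** jac_product F \<alpha> B xs z0 T"

definition elog :: "real \<Rightarrow> ereal" where
  "elog x = (if x > 0 then ereal (ln x) else -\<infinity>)"

text \<open>Largest Lyapunov exponent of the forced system along the orbit from z0
  (as limsup; it equals the limit whenever the limit exists).\<close>
definition lyap_gtf :: "(real^'m \<Rightarrow> real^'m) \<Rightarrow> real \<Rightarrow> real^'m^'n \<Rightarrow> (nat \<Rightarrow> real^'n)
    \<Rightarrow> real^'m \<Rightarrow> ereal" where
  "lyap_gtf F \<alpha> B xs z0 =
     limsup (\<lambda>T. ereal (1 / real T) * elog (spec_norm (jac_product F \<alpha> B xs z0 T)))"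

end

theory Submission imports Defs begin

lemma BtB_inj:
  fixes B :: "real^'m^'n"
  assumes "inj ((*v) B)"
  shows "inj ((*v) (transpose B ** B))"
proof (rule injI)
  fix x y assume h: "(transpose B ** B) *v x = (transpose B ** B) *v y"
  let ?d = "x - y"
  have "(transpose B ** B) *v ?d = 0" using h
    by (simp add: matrix_vector_mult_diff_distrib)
  hence "?d \<bullet> ((transpose B ** B) *v ?d) = 0" by simp
  moreover have "?d \<bullet> ((transpose B ** B) *v ?d) = (B *v ?d) \<bullet> (B *v ?d)"
    by (metis dot_lmul_matrix inner_commute matrix_vector_mul_assoc transpose_matrix_vector)
  ultimately have "B *v ?d = 0" by simp
  hence "B *v x = B *v y" by (simp add: matrix_vector_mult_diff_distrib)
  thus "x = y" using assms by (simp add: inj_eq)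
qed

lemma pinv_left:
  fixes B :: "real^'m^'n"
  assumes fr: "rank B = CARD('m)"
  shows "pinv B ** B = mat 1"
proof -
  have injB: "inj ((*v) B)" using fr full_rank_injective by blast
  define C where "C = transpose B ** B"
  obtain L where LC: "L ** C = mat 1"
    using BtB_inj[OF injB] matrix_left_invertible_injective unfolding C_def by blast
  have CL: "C ** L = mat 1" using LC matrix_left_right_inverse by blast
  have Ct: "transpose C = C" by (simp add: C_def matrix_transpose_mul)
  have Lt: "transpose L = L"
  proof -
    have "transpose L ** C = mat 1"
      by (metis CL Ct matrix_transpose_mul transpose_mat)
    hence "transpose L = transpose L ** (C ** L)" using CL by simp
    also have "\<dots> = L" by (metis \<open>transpose L ** C = mat 1\<close> matrix_mul_assoc matrix_mul_lid)
    finally show ?thesis .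
  qed
  define cond where "cond P \<longleftrightarrow> B ** P ** B = B \<and> P ** B ** P = P \<and>
               transpose (B ** P) = B ** P \<and> transpose (P ** B) = P ** B" for P
  have PB: "P ** B = mat 1" if "B ** P ** B = B" for P
  proof -
    have "\<forall>x. (P ** B) *v x = mat 1 *v x"
    proof
      fix x
      have "B *v ((P ** B) *v x) = B *v x"
        by (metis matrix_vector_mul_assoc matrix_mul_assoc that)
      thus "(P ** B) *v x = mat 1 *v x" using injB by (simp add: inj_eq)
    qed
    thus ?thesis by (simp add: matrix_eq)
  qed
  define P0 where "P0 = L ** transpose B"
  have P0B: "P0 ** B = mat 1" unfolding P0_def using LC C_def by (simp add: matrix_mul_assoc)
  have "cond P0" unfolding cond_def
  proof (intro conjI)
    show "B ** P0 ** B = B" by (metis P0B matrix_mul_assoc matrix_mul_rid)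
    show "P0 ** B ** P0 = P0" by (simp add: P0B)
    show "transpose (B ** P0) = B ** P0" unfolding P0_def
      by (simp add: matrix_transpose_mul Lt matrix_mul_assoc)
    show "transpose (P0 ** B) = P0 ** B" by (simp add: P0B)
  qed
  moreover have "P = P0" if "cond P" for P
  proof -
    have pb: "P ** B = mat 1" using PB that unfolding cond_def by blast
    have sym: "transpose (B ** P) = B ** P" using that unfolding cond_def by blast
    have "C ** P = transpose B"
    proof -
      have "C ** P = transpose B ** (B ** P)" by (simp add: C_def matrix_mul_assoc)
      also have "\<dots> = transpose B ** (transpose P ** transpose B)"
        by (metis sym matrix_transpose_mul)
      also have "\<dots> = transpose (P ** B) ** transpose B"
        by (simp add: matrix_transpose_mul matrix_mul_assoc)
      also have "\<dots> = transpose B" by (simp add: pb)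
      finally show ?thesis .
    qed
    hence "L ** (C ** P) = P0" by (simp add: P0_def)
    thus ?thesis by (simp add: matrix_mul_assoc LC)
  qed
  ultimately have "\<exists>!P. cond P" by blast
  hence "cond (pinv B)" unfolding pinv_def cond_def[symmetric] by (rule theI')
  thus ?thesis using PB unfolding cond_def by blast
qed

lemma spec_norm_matrix:
  fixes f :: "real^'a \<Rightarrow> real^'a"
  assumes "linear f"
  shows "spec_norm (matrix f) = onorm f"
proof -
  have "(\<lambda>v. matrix f *v v) = f" using assms by (simp add: matrix_works)
  thus ?thesis by (simp add: spec_norm_def)
qed

lemma spec_norm_mult:
  fixes A :: "real^'a^'a" and C :: "real^'a^'a"
  shows "spec_norm (A ** C) \<le> spec_norm A * spec_norm C"
proof -
  have "(\<lambda>v. (A ** C) *v v) = (\<lambda>v. A *v v) \<circ> (\<lambda>v. C *v v)"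
    by (auto simp: matrix_vector_mul_assoc)
  thus ?thesis unfolding spec_norm_def
    by (metis onorm_compose matrix_vector_mul_bounded_linear)
qed

lemma spec_norm_nonneg: "0 \<le> spec_norm (A :: real^'a^'b)"
  unfolding spec_norm_def by (simp add: onorm_pos_le matrix_vector_mul_bounded_linear)

lemma jac_forced:
  fixes F :: "real^'m \<Rightarrow> real^'m" and B :: "real^'m^'n"
  assumes fr: "rank B = CARD('m)" and diff: "\<forall>z. F differentiable (at z)"
  shows "spec_norm (jacobian (\<lambda>w. F (gtf_delta \<alpha> B w x)) z)
     = \<bar>1 - \<alpha>\<bar> * spec_norm (jacobian F ((1 - \<alpha>) *\<^sub>R z + \<alpha> *\<^sub>R (pinv B *v x)))"
proof -
  define c where "c = \<alpha> *\<^sub>R (pinv B *v x)"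
  have dl: "gtf_delta \<alpha> B w x = (1 - \<alpha>) *\<^sub>R w + c" for w
    unfolding gtf_delta_def c_def pinv_left[OF fr]
    by (simp add: matrix_vector_mult_diff_rdistrib scaleR_matrix_vector_assoc[symmetric] algebra_simps)
  define a where "a = (1 - \<alpha>) *\<^sub>R z + c"
  define f' where "f' = frechet_derivative F (at a)"
  have Fd: "(F has_derivative f') (at a)"
    using diff f'_def frechet_derivative_works by blast
  have bl: "bounded_linear f'" using Fd has_derivative_bounded_linear by blast
  have ad: "((\<lambda>w. (1 - \<alpha>) *\<^sub>R w + c) has_derivative (\<lambda>v. (1 - \<alpha>) *\<^sub>R v)) (at z)"
    by (auto intro!: derivative_eq_intros)
  have "((F \<circ> (\<lambda>w. (1 - \<alpha>) *\<^sub>R w + c)) has_derivative (f' \<circ> (\<lambda>v. (1 - \<alpha>) *\<^sub>R v))) (at z)"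
    using diff_chain_at[OF ad] Fd a_def by simp
  moreover have "f' \<circ> (\<lambda>v. (1 - \<alpha>) *\<^sub>R v) = (\<lambda>v. (1 - \<alpha>) *\<^sub>R f' v)"
    using bl by (auto simp: linear_simps)
  ultimately have G: "((\<lambda>w. F (gtf_delta \<alpha> B w x)) has_derivative (\<lambda>v. (1 - \<alpha>) *\<^sub>R f' v)) (at z)"
    by (simp add: dl o_def)
  have lin: "linear (\<lambda>v. (1 - \<alpha>) *\<^sub>R f' v)" using G has_derivative_linear by blast
  have "spec_norm (jacobian (\<lambda>w. F (gtf_delta \<alpha> B w x)) z) = onorm (\<lambda>v. (1 - \<alpha>) *\<^sub>R f' v)"
    unfolding jacobian_def frechet_derivative_at[OF G, symmetric] by (rule spec_norm_matrix[OF lin])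
  also have "\<dots> = \<bar>1 - \<alpha>\<bar> * onorm f'" by (rule onorm_scaleR[OF bl])
  also have "onorm f' = spec_norm (jacobian F a)"
    unfolding jacobian_def f'_def
    by (rule spec_norm_matrix[symmetric]) (use bl in \<open>simp add: bounded_linear.linear f'_def\<close>)
  finally show ?thesis by (simp add: a_def c_def)
qed

lemma elog_step:
  fixes s r :: real and T :: nat
  assumes "T \<ge> 1" "0 \<le> r" "s \<le> r ^ T"
  shows "ereal (1 / real T) * elog s \<le> elog r"
proof (cases "s > 0")
  case False
  then show ?thesis using assms by (simp add: elog_def)
next
  case True
  hence "r ^ T > 0" using assms by linarith
  hence rp: "r > 0" using assms
    by (metis less_eq_real_def power_0_left zero_less_one_class.zero_le_one not_less zero_less_iff_neq_zero le_numeral_extra(3) le_less_trans linorder_not_le power_eq_0_iff)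
  have "ln s \<le> ln (r ^ T)" using True assms by simp
  also have "\<dots> = real T * ln r" using rp by (simp add: ln_realpow)
  finally have "ln s / real T \<le> ln r" using assms by (simp add: divide_le_eq mult.commute)
  thus ?thesis using True rp by (simp add: elog_def)
qed

lemma jac_product_bound:
  fixes F :: "real^'m \<Rightarrow> real^'m" and B :: "real^'m^'n"
  assumes "\<And>t z. spec_norm (jacobian (\<lambda>w. F (gtf_delta \<alpha> B w (xs t))) z) \<le> r"
  shows "spec_norm (jac_product F \<alpha> B xs z0 T) \<le> r ^ T"
proof (induction T)
  case 0
  have "(\<lambda>v. (mat 1 :: real^'m^'m) *v v) = (\<lambda>v. v)" by simp
  then show ?case by (simp add: spec_norm_def onorm_id)
next
  case (Suc T)
  have r0: "0 \<le> r" using assms[of 0 z0] spec_norm_nonneg order_trans by blast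
  have "spec_norm (jac_product F \<alpha> B xs z0 (Suc T)) \<le>
     spec_norm (jacobian (\<lambda>w. F (gtf_delta \<alpha> B w (xs T))) (forced_orbit F \<alpha> B xs z0 T))
     * spec_norm (jac_product F \<alpha> B xs z0 T)"
    by (simp add: spec_norm_mult)
  also have "\<dots> \<le> r * r ^ T"
    by (intro mult_mono assms Suc.IH r0 spec_norm_nonneg)
  finally show ?case by simp
qed

theorem proposition1:
  fixes F :: "real^'m \<Rightarrow> real^'m"
    and B :: "real^'m^'n"
    and \<alpha> :: real
  assumes MN: "CARD('m) \<le> CARD('n)"
    and full_rank: "rank B = CARD('m)"
    and diff: "\<forall>z. F differentiable (at z)"
    and bdd: "bdd_above (range (\<lambda>z. spec_norm (jacobian F z)))"
    and sig_gt1: "1 < (SUP z. spec_norm (jacobian F z))"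
    and alpha_lo: "1 - 1 / (SUP z. spec_norm (jacobian F z)) < \<alpha>"
    and alpha_hi: "\<alpha> \<le> 1"
  shows "(1 - \<alpha>) * (SUP z. spec_norm (jacobian F z)) < 1
    \<and> (\<forall>(xs :: nat \<Rightarrow> real^'n) t z.
          spec_norm (jacobian (\<lambda>w. F (gtf_delta \<alpha> B w (xs t))) z)
            \<le> (1 - \<alpha>) * (SUP z. spec_norm (jacobian F z)))
    \<and> (\<forall>(xs :: nat \<Rightarrow> real^'n) z0.
          lyap_gtf F \<alpha> B xs z0 \<le> elog ((1 - \<alpha>) * (SUP z. spec_norm (jacobian F z))))
    \<and> elog ((1 - \<alpha>) * (SUP z. spec_norm (jacobian F z))) < 0"
proof -
  define \<sigma> where "\<sigma> = (SUP z. spec_norm (jacobian F z))"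
  have sp: "\<sigma> > 0" using sig_gt1 \<sigma>_def by simp
  have r1: "(1 - \<alpha>) * \<sigma> < 1"
  proof -
    have "1 - \<alpha> < 1 / \<sigma>" using alpha_lo \<sigma>_def by simp
    thus ?thesis using sp by (simp add: less_divide_eq)
  qed
  have r0: "0 \<le> (1 - \<alpha>) * \<sigma>" using sp alpha_hi by simp
  have J: "spec_norm (jacobian (\<lambda>w. F (gtf_delta \<alpha> B w x)) z) \<le> (1 - \<alpha>) * \<sigma>" for x z
  proof -
    have "spec_norm (jacobian (\<lambda>w. F (gtf_delta \<alpha> B w x)) z)
       = \<bar>1 - \<alpha>\<bar> * spec_norm (jacobian F ((1 - \<alpha>) *\<^sub>R z + \<alpha> *\<^sub>R (pinv B *v x)))"
      by (rule jac_forced[OF full_rank diff])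
    also have "\<dots> \<le> (1 - \<alpha>) * \<sigma>"
      using alpha_hi unfolding \<sigma>_def
      by (intro mult_mono cSUP_upper bdd) (auto simp: spec_norm_nonneg)
    finally show ?thesis .
  qed
  have L: "lyap_gtf F \<alpha> B xs z0 \<le> elog ((1 - \<alpha>) * \<sigma>)" for xs :: "nat \<Rightarrow> real^'n" and z0
    unfolding lyap_gtf_def
  proof (rule Limsup_bounded, unfold eventually_sequentially, intro exI allI impI)
    fix T :: nat assume "1 \<le> T"
    moreover have "spec_norm (jac_product F \<alpha> B xs z0 T) \<le> ((1 - \<alpha>) * \<sigma>) ^ T"
      by (rule jac_product_bound) (rule J)
    ultimately show "ereal (1 / real T) * elog (spec_norm (jac_product F \<alpha> B xs z0 T))
        \<le> elog ((1 - \<alpha>) * \<sigma>)"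
      using elog_step r0 by blast
  qed
  have E: "elog ((1 - \<alpha>) * \<sigma>) < 0"
    using r1 by (simp add: elog_def)
  show ?thesis using r1 J L E unfolding \<sigma>_def by blast
qed
end
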